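(* Let $G(\circ)$, $G(\ast)$ be groups on a set $G$ of size $n$ and let $a\in G$ with $\sigma=|a|_\circ>|a|_\ast=\tau$. Then $\mathrm{dist}_a\ge (n/\sigma)\lceil\sigma/\tau\rceil\ge n/\tau$.
   Context: $|a|_\circ$ denotes the order of $a$ in $G(\circ)$, $|a|_\ast$ its order in $G(\ast)$. $\mathrm{dist}_a=|\{b\in G: a\circ b\ne a\ast b\}|$. *)

theory Defs
  imports "HOL-Algebra.Multiplicative_Group" Complex_Main
begin

definition dist_elem :: "('a, 'b) monoid_scheme \<Rightarrow> ('a, 'c) monoid_scheme \<Rightarrow> 'a \<Rightarrow> nat" where
  "dist_elem G H a = card {b \<in> carrier G. a \<otimes>\<^bsub>G\<^esub> b \<noteq> a \<otimes>\<^bsub>H\<^esub> b}"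

end

theory Submission
  imports Defs
begin

theorem lemma4p11:
  fixes G H :: "'a monoid" and a :: 'a
  assumes "group G" and "group H"
    and "carrier H = carrier G"
    and "finite (carrier G)"
    and "a \<in> carrier G"
    and "group.ord H a < group.ord G a"
  shows "real (card (carrier G)) / real (group.ord G a) * real_of_int \<lceil>real (group.ord G a) / real (group.ord H a)\<rceil>
           \<le> real (dist_elem G H a) \<and>
         real (card (carrier G)) / real (group.ord H a)
           \<le> real (card (carrier G)) / real (group.ord G a) * real_of_int \<lceil>real (group.ord G a) / real (group.ord H a)\<rceil>"
proof -
  interpret G: group G by fact
  interpret H: group H by fact
  note cH = assms(3) and fin = assms(4) and a = assms(5)
  define \<sigma> where "\<sigma> = G.ord a"
  define \<tau> where "\<tau> = H.ord a"
  define D where "D = {b \<in> carrier G. a \<otimes>\<^bsub>G\<^esub> b \<noteq> a \<otimes>\<^bsub>H\<^esub> b}"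
  have aH: "a \<in> carrier H" using a cH by simp
  have \<tau>1: "\<tau> \<ge> 1" unfolding \<tau>_def using H.ord_ge_1 fin cH aH by simp
  have lt: "\<tau> < \<sigma>" using assms(6) unfolding \<sigma>_def \<tau>_def .
  have finD: "finite D" using fin unfolding D_def by simp
  have window: "\<exists>j<\<tau>. a [^]\<^bsub>G\<^esub> j \<otimes>\<^bsub>G\<^esub> c \<in> D" if c: "c \<in> carrier G" for c
  proof (rule ccontr)
    assume "\<not> ?thesis"
    then have ag: "\<And>j. j < \<tau> \<Longrightarrow> a \<otimes>\<^bsub>G\<^esub> (a [^]\<^bsub>G\<^esub> j \<otimes>\<^bsub>G\<^esub> c) = a \<otimes>\<^bsub>H\<^esub> (a [^]\<^bsub>G\<^esub> j \<otimes>\<^bsub>G\<^esub> c)"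
      unfolding D_def using a c by auto
    have eq: "j \<le> \<tau> \<Longrightarrow> a [^]\<^bsub>G\<^esub> j \<otimes>\<^bsub>G\<^esub> c = a [^]\<^bsub>H\<^esub> j \<otimes>\<^bsub>H\<^esub> c" for j
    proof (induction j)
      case 0
      then show ?case using c cH by simp
    next
      case (Suc j)
      have "a [^]\<^bsub>G\<^esub> Suc j \<otimes>\<^bsub>G\<^esub> c = a \<otimes>\<^bsub>G\<^esub> (a [^]\<^bsub>G\<^esub> j \<otimes>\<^bsub>G\<^esub> c)"
        using a c by (simp only: G.nat_pow_Suc2[OF a] G.m_assoc[OF a G.nat_pow_closed[OF a] c])
      also have "\<dots> = a \<otimes>\<^bsub>H\<^esub> (a [^]\<^bsub>G\<^esub> j \<otimes>\<^bsub>G\<^esub> c)" using ag[of j] Suc.prems by simp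
      also have "\<dots> = a \<otimes>\<^bsub>H\<^esub> (a [^]\<^bsub>H\<^esub> j \<otimes>\<^bsub>H\<^esub> c)" using Suc.IH Suc.prems by simp
      also have "\<dots> = a [^]\<^bsub>H\<^esub> Suc j \<otimes>\<^bsub>H\<^esub> c"
        using aH c cH by (simp only: H.nat_pow_Suc2[OF aH] H.m_assoc[OF aH H.nat_pow_closed[OF aH]])
      finally show ?case .
    qed
    have "a [^]\<^bsub>G\<^esub> \<tau> \<otimes>\<^bsub>G\<^esub> c = c"
      using eq[of \<tau>] aH c cH unfolding \<tau>_def by simp
    then have "a [^]\<^bsub>G\<^esub> \<tau> = \<one>\<^bsub>G\<^esub>" using a c by simp
    then have "\<sigma> dvd \<tau>" using G.pow_eq_id a unfolding \<sigma>_def by simp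
    then show False using \<tau>1 lt by (simp add: nat_dvd_not_less)
  qed
  define S where "S b = {j::nat. a [^]\<^bsub>G\<^esub> j \<otimes>\<^bsub>G\<^esub> b \<in> D}" for b
  have split: "card (S b \<inter> {..<m + k}) = card (S b \<inter> {..<m}) + card (S b \<inter> {m..<m+k})" for b m k
  proof -
    have "S b \<inter> {..<m + k} = (S b \<inter> {..<m}) \<union> (S b \<inter> {m..<m+k})" by auto
    then show ?thesis by (simp add: card_Un_disjoint disjoint_iff)
  qed
  have blocks: "card (S b \<inter> {..<\<tau> * m}) \<ge> m" if b: "b \<in> carrier G" for b m
  proof (induction m)
    case 0 then show ?case by simp
  next
    case (Suc m)
    obtain j where j: "j < \<tau>" "a [^]\<^bsub>G\<^esub> j \<otimes>\<^bsub>G\<^esub> (a [^]\<^bsub>G\<^esub> (\<tau>*m) \<otimes>\<^bsub>G\<^esub> b) \<in> D"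
      using window[of "a [^]\<^bsub>G\<^esub> (\<tau>*m) \<otimes>\<^bsub>G\<^esub> b"] a b by auto
    have "a [^]\<^bsub>G\<^esub> (\<tau>*m + j) \<otimes>\<^bsub>G\<^esub> b \<in> D"
      using j(2) a b by (simp add: G.m_assoc[symmetric] G.nat_pow_mult add.commute)
    then have "\<tau>*m + j \<in> S b \<inter> {\<tau>*m..<\<tau>*m+\<tau>}" using j(1) unfolding S_def by simp
    then have "card (S b \<inter> {\<tau>*m..<\<tau>*m+\<tau>}) \<ge> 1"
      by (metis One_nat_def Suc_leI card_gt_0_iff emptyE finite_Int finite_atLeastLessThan)
    then show ?case using split[of b "\<tau>*m" \<tau>] Suc by (simp add: add.commute)
  qed
  have period: "card (S b \<inter> {\<sigma>*t..<\<sigma>*t+\<sigma>}) = card (S b \<inter> {..<\<sigma>})" if b: "b \<in> carrier G" for b t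
  proof -
    have pw: "a [^]\<^bsub>G\<^esub> (j + \<sigma>*t) = a [^]\<^bsub>G\<^esub> j" for j
      using a unfolding \<sigma>_def
      by (simp add: G.nat_pow_mult[symmetric] G.nat_pow_pow[symmetric])
    have "(\<lambda>j. j + \<sigma>*t) ` (S b \<inter> {..<\<sigma>}) = S b \<inter> {\<sigma>*t..<\<sigma>*t+\<sigma>}"
    proof
      show "(\<lambda>j. j + \<sigma>*t) ` (S b \<inter> {..<\<sigma>}) \<subseteq> S b \<inter> {\<sigma>*t..<\<sigma>*t+\<sigma>}"
        using pw unfolding S_def by auto
    next
      show "S b \<inter> {\<sigma>*t..<\<sigma>*t+\<sigma>} \<subseteq> (\<lambda>j. j + \<sigma>*t) ` (S b \<inter> {..<\<sigma>})"
      proof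
        fix x assume x: "x \<in> S b \<inter> {\<sigma>*t..<\<sigma>*t+\<sigma>}"
        then have "x = (x - \<sigma>*t) + \<sigma>*t" by auto
        moreover have "x - \<sigma>*t \<in> S b \<inter> {..<\<sigma>}"
          using x pw[of "x - \<sigma>*t"] unfolding S_def by auto
        ultimately show "x \<in> (\<lambda>j. j + \<sigma>*t) ` (S b \<inter> {..<\<sigma>})" by blast
      qed
    qed
    moreover have "inj_on (\<lambda>j. j + \<sigma>*t) (S b \<inter> {..<\<sigma>})" by (simp add: inj_on_def)
    ultimately show ?thesis by (metis card_image)
  qed
  have mult: "card (S b \<inter> {..<\<sigma> * t}) = t * card (S b \<inter> {..<\<sigma>})" if b: "b \<in> carrier G" for b t
  proof (induction t)
    case 0 then show ?case by simp
  next
    case (Suc t)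
    show ?case using split[of b "\<sigma>*t" \<sigma>] period[OF b, of t] Suc by (simp add: add.commute)
  qed
  have perb: "\<tau> * card (S b \<inter> {..<\<sigma>}) \<ge> \<sigma>" if b: "b \<in> carrier G" for b
    using blocks[OF b, of \<sigma>] mult[OF b, of \<tau>] by (simp add: mult.commute)
  have sumeq: "(\<Sum>b\<in>carrier G. card (S b \<inter> {..<\<sigma>})) = \<sigma> * card D"
  proof -
    have "(\<Sum>b\<in>carrier G. card (S b \<inter> {..<\<sigma>})) = (\<Sum>b\<in>carrier G. \<Sum>j<\<sigma>. if a [^]\<^bsub>G\<^esub> j \<otimes>\<^bsub>G\<^esub> b \<in> D then 1 else 0)"
    proof (intro sum.cong refl)
      fix b
      have "S b \<inter> {..<\<sigma>} = {j\<in>{..<\<sigma>}. a [^]\<^bsub>G\<^esub> j \<otimes>\<^bsub>G\<^esub> b \<in> D}"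
        unfolding S_def by blast
      then show "card (S b \<inter> {..<\<sigma>}) = (\<Sum>j<\<sigma>. if a [^]\<^bsub>G\<^esub> j \<otimes>\<^bsub>G\<^esub> b \<in> D then 1 else 0)"
        by (simp add: sum.inter_filter[symmetric])
    qed
    also have "\<dots> = (\<Sum>j<\<sigma>. \<Sum>b\<in>carrier G. if a [^]\<^bsub>G\<^esub> j \<otimes>\<^bsub>G\<^esub> b \<in> D then 1 else 0)"
      by (rule sum.swap)
    also have "\<dots> = (\<Sum>j<\<sigma>. card D)"
    proof (intro sum.cong refl)
      fix j :: nat
      let ?A = "{b \<in> carrier G. a [^]\<^bsub>G\<^esub> j \<otimes>\<^bsub>G\<^esub> b \<in> D}"
      have "(\<Sum>b\<in>carrier G. if a [^]\<^bsub>G\<^esub> j \<otimes>\<^bsub>G\<^esub> b \<in> D then 1 else 0) = card ?A"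
        using fin by (simp add: sum.If_cases Int_def)
      also have "(\<lambda>b. a [^]\<^bsub>G\<^esub> j \<otimes>\<^bsub>G\<^esub> b) ` ?A = D"
      proof
        show "(\<lambda>b. a [^]\<^bsub>G\<^esub> j \<otimes>\<^bsub>G\<^esub> b) ` ?A \<subseteq> D" by auto
        show "D \<subseteq> (\<lambda>b. a [^]\<^bsub>G\<^esub> j \<otimes>\<^bsub>G\<^esub> b) ` ?A"
        proof
          fix d assume d: "d \<in> D"
          then have dc: "d \<in> carrier G" unfolding D_def by simp
          let ?x = "inv\<^bsub>G\<^esub> (a [^]\<^bsub>G\<^esub> j) \<otimes>\<^bsub>G\<^esub> d"
          have p: "a [^]\<^bsub>G\<^esub> j \<in> carrier G" using a by simp
          have "a [^]\<^bsub>G\<^esub> j \<otimes>\<^bsub>G\<^esub> ?x = (a [^]\<^bsub>G\<^esub> j \<otimes>\<^bsub>G\<^esub> inv\<^bsub>G\<^esub> (a [^]\<^bsub>G\<^esub> j)) \<otimes>\<^bsub>G\<^esub> d"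
            by (rule G.m_assoc[OF p G.inv_closed[OF p] dc, symmetric])
          also have "\<dots> = d" using p dc by simp
          finally have e: "a [^]\<^bsub>G\<^esub> j \<otimes>\<^bsub>G\<^esub> ?x = d" .
          have "?x \<in> carrier G" using p dc by simp
          then have "?x \<in> ?A" using e d by simp
          then show "d \<in> (\<lambda>b. a [^]\<^bsub>G\<^esub> j \<otimes>\<^bsub>G\<^esub> b) ` ?A" using e by (intro image_eqI[of _ _ ?x]) simp_all
        qed
      qed
      moreover have "inj_on (\<lambda>b. a [^]\<^bsub>G\<^esub> j \<otimes>\<^bsub>G\<^esub> b) ?A"
        using a by (auto simp: inj_on_def)
      ultimately show "(\<Sum>b\<in>carrier G. if a [^]\<^bsub>G\<^esub> j \<otimes>\<^bsub>G\<^esub> b \<in> D then 1 else 0) = card D"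
        by (metis card_image)
    qed
    finally show ?thesis by simp
  qed
  define k where "k = \<lceil>real \<sigma> / real \<tau>\<rceil>"
  have kle: "k \<le> int (card (S b \<inter> {..<\<sigma>}))" if b: "b \<in> carrier G" for b
  proof -
    have "real \<sigma> \<le> real \<tau> * real (card (S b \<inter> {..<\<sigma>}))" using perb[OF b] by (metis of_nat_le_iff of_nat_mult)
    then have "real \<sigma> / real \<tau> \<le> real (card (S b \<inter> {..<\<sigma>}))" using \<tau>1 by (simp add: field_simps)
    then show ?thesis unfolding k_def by (simp add: ceiling_le_iff)
  qed
  have "int (card (carrier G)) * k \<le> (\<Sum>b\<in>carrier G. int (card (S b \<inter> {..<\<sigma>})))"
    using sum_mono[of "carrier G" "\<lambda>_. k", OF kle] by (simp add: mult.commute)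
  also have "\<dots> = int (\<sigma> * card D)" using sumeq by (metis of_nat_sum)
  finally have main: "real (card (carrier G)) * real_of_int k \<le> real \<sigma> * real (card D)"
    by (metis of_int_le_iff of_int_mult of_int_of_nat_eq of_nat_mult)
  have \<sigma>0: "\<sigma> > 0" using lt by simp
  have dd: "dist_elem G H a = card D" unfolding dist_elem_def D_def by simp
  have part1: "real (card (carrier G)) / real \<sigma> * real_of_int k \<le> real (card D)"
    using main \<sigma>0 by (simp add: field_simps)
  have part2: "real (card (carrier G)) / real \<tau> \<le> real (card (carrier G)) / real \<sigma> * real_of_int k"
  proof -
    have "real \<sigma> / real \<tau> \<le> real_of_int k" unfolding k_def by simp
    then have "real (card (carrier G)) / real \<sigma> * (real \<sigma> / real \<tau>) \<le> real (card (carrier G)) / real \<sigma> * real_of_int k"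
      by (intro mult_left_mono) auto
    then show ?thesis using \<sigma>0 by simp
  qed
  show ?thesis using part1 part2 dd unfolding \<sigma>_def \<tau>_def k_def by simp
qed

end
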